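(* Let $r\ge 2$ and $x\ge 2$ be integers, let $G$ be a $K_r$-free graph on $x$ vertices, and let $\mathcal I$ denote the number of independent sets of $G$ (including the empty set). Then $$\log \mathcal I\;\ge\;\max\left(\frac{x^{1/r}}{2},\ \frac{\log^2 x}{18\log(2r)}\right).$$
   Context: A graph is $K_r$-free if it contains no $r$ pairwise adjacent vertices. Logarithms are base 2. *)

theory Defs
  imports "HOL-Analysis.Analysis"
begin

definition simple_graph :: "'a set \<Rightarrow> ('a \<Rightarrow> 'a \<Rightarrow> bool) \<Rightarrow> bool" where
  "simple_graph V E \<longleftrightarrow> finite V \<and> (\<forall>u v. E u v \<longrightarrow> E v u)
     \<and> (\<forall>v. \<not> E v v) \<and> (\<forall>u v. E u v \<longrightarrow> u \<in> V \<and> v \<in> V)"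

definition is_clique :: "'a set \<Rightarrow> ('a \<Rightarrow> 'a \<Rightarrow> bool) \<Rightarrow> 'a set \<Rightarrow> bool" where
  "is_clique V E C \<longleftrightarrow> C \<subseteq> V \<and> (\<forall>u\<in>C. \<forall>v\<in>C. u \<noteq> v \<longrightarrow> E u v)"

definition Kr_free :: "nat \<Rightarrow> 'a set \<Rightarrow> ('a \<Rightarrow> 'a \<Rightarrow> bool) \<Rightarrow> bool" where
  "Kr_free r V E \<longleftrightarrow> \<not> (\<exists>C. is_clique V E C \<and> finite C \<and> card C = r)"

definition is_independent :: "'a set \<Rightarrow> ('a \<Rightarrow> 'a \<Rightarrow> bool) \<Rightarrow> 'a set \<Rightarrow> bool" where
  "is_independent V E S \<longleftrightarrow> S \<subseteq> V \<and> (\<forall>u\<in>S. \<forall>v\<in>S. \<not> E u v)"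

definition num_independent_sets :: "'a set \<Rightarrow> ('a \<Rightarrow> 'a \<Rightarrow> bool) \<Rightarrow> nat" where
  "num_independent_sets V E = card {S. is_independent V E S}"

end

theory Submission
  imports Defs
begin


definition ind :: "('a \<Rightarrow> 'a \<Rightarrow> bool) \<Rightarrow> 'a set \<Rightarrow> 'a set set" where
  "ind E U = {S. S \<subseteq> U \<and> (\<forall>u\<in>S. \<forall>v\<in>S. \<not> E u v)}"

definition cf :: "nat \<Rightarrow> ('a \<Rightarrow> 'a \<Rightarrow> bool) \<Rightarrow> 'a set \<Rightarrow> bool" where
  "cf r E U \<longleftrightarrow> \<not> (\<exists>C. C \<subseteq> U \<and> (\<forall>u\<in>C. \<forall>v\<in>C. u \<noteq> v \<longrightarrow> E u v) \<and> finite C \<and> card C = r)"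

definition nn :: "('a \<Rightarrow> 'a \<Rightarrow> bool) \<Rightarrow> 'a set \<Rightarrow> 'a \<Rightarrow> 'a set" where
  "nn E U v = {u\<in>U. u \<noteq> v \<and> \<not> E v u}"

lemma ind_finite: "finite U \<Longrightarrow> finite (ind E U)"
  by (rule finite_subset[of _ "Pow U"]) (auto simp: ind_def)

lemma ind_mono: "finite U \<Longrightarrow> W \<subseteq> U \<Longrightarrow> card (ind E W) \<le> card (ind E U)"
  by (rule card_mono[OF ind_finite]) (auto simp: ind_def)

lemma ind_ge1: "finite U \<Longrightarrow> 1 \<le> card (ind E U)"
proof -
  assume "finite U"
  have "{} \<in> ind E U" by (auto simp: ind_def)
  then show ?thesis using ind_finite[OF \<open>finite U\<close>, of E]
    using card_mono[of "ind E U" "{{}}"] by simp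
qed

lemma cf_mono: "W \<subseteq> U \<Longrightarrow> cf r E U \<Longrightarrow> cf r E W"
  unfolding cf_def proof (elim contrapos_nn exE conjE)
  fix C assume "W \<subseteq> U" "C \<subseteq> W" "\<forall>u\<in>C. \<forall>v\<in>C. u \<noteq> v \<longrightarrow> E u v" "finite C" "card C = r"
  then show "\<exists>C. C \<subseteq> U \<and> (\<forall>u\<in>C. \<forall>v\<in>C. u \<noteq> v \<longrightarrow> E u v) \<and> finite C \<and> card C = r"
    by (intro exI[of _ C]) auto
qed

lemma ind_split:
  assumes fin: "finite U" and v: "v \<in> U" and irr: "\<forall>a. \<not> E a a" and sym: "\<forall>a b. E a b \<longrightarrow> E b a"
  shows "card (ind E (U - {v})) + card (ind E (nn E U v)) \<le> card (ind E U)"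
proof -
  have disj: "ind E (U - {v}) \<inter> insert v ` ind E (nn E U v) = {}"
    by (auto simp: ind_def)
  have sub: "ind E (U - {v}) \<union> insert v ` ind E (nn E U v) \<subseteq> ind E U"
  proof
    fix S assume "S \<in> ind E (U - {v}) \<union> insert v ` ind E (nn E U v)"
    then show "S \<in> ind E U"
    proof
      assume "S \<in> ind E (U - {v})" then show ?thesis by (auto simp: ind_def)
    next
      assume "S \<in> insert v ` ind E (nn E U v)"
      then obtain T where T: "T \<in> ind E (nn E U v)" "S = insert v T" by blast
      have a: "T \<subseteq> U" "\<forall>u\<in>T. \<forall>w\<in>T. \<not> E u w" "\<forall>u\<in>T. \<not> E v u"
        using T(1) by (auto simp: ind_def nn_def)
      have b: "\<forall>u\<in>T. \<not> E u v" using a(3) sym by blast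
      show ?thesis unfolding ind_def T(2) using a b v irr by blast
    qed
  qed
  have inj: "inj_on (insert v) (ind E (nn E U v))"
  proof (rule inj_onI)
    fix S T assume "S \<in> ind E (nn E U v)" "T \<in> ind E (nn E U v)" "insert v S = insert v T"
    moreover have "v \<notin> S" "v \<notin> T" using calculation(1,2) by (auto simp: ind_def nn_def)
    ultimately show "S = T" using insert_ident by metis
  qed
  have f1: "finite (ind E (U - {v}))" using fin by (simp add: ind_finite)
  have f2: "finite (ind E (nn E U v))" using fin by (auto intro: ind_finite simp: nn_def)
  have "card (ind E (U - {v})) + card (ind E (nn E U v))
      = card (ind E (U - {v}) \<union> insert v ` ind E (nn E U v))"
    using card_Un_disjoint[OF f1 finite_imageI[OF f2] disj] card_image[OF inj] by simp
  also have "\<dots> \<le> card (ind E U)"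
    by (rule card_mono[OF ind_finite[OF fin] sub])
  finally show ?thesis .
qed

lemma ind_double:
  assumes fin: "finite U" and v: "v \<in> U" and irr: "\<forall>a. \<not> E a a" and sym: "\<forall>a b. E a b \<longrightarrow> E b a"
  shows "2 * card (ind E (nn E U v)) \<le> card (ind E U)"
proof -
  have "card (ind E (nn E U v)) \<le> card (ind E (U - {v}))"
    by (rule ind_mono) (use fin in \<open>auto simp: nn_def\<close>)
  then show ?thesis using ind_split[OF assms] by simp
qed



lemma greedy:
  assumes irr: "\<forall>a. \<not> E a a" and sym: "\<forall>a b. E a b \<longrightarrow> E b a"
    and fin: "finite U" and D: "D \<ge> 1"
    and deg: "\<forall>v\<in>U. card {u\<in>U. E v u} < D"
  shows "W \<subseteq> U \<Longrightarrow> j * D \<le> card W \<Longrightarrow> 2 ^ j \<le> card (ind E W)"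
proof (induction j arbitrary: W)
  case 0
  have "finite W" using fin 0(1) finite_subset by blast
  then show ?case using ind_ge1 by simp
next
  case (Suc j)
  have finW: "finite W" using fin Suc(2) finite_subset by blast
  have "card W \<ge> 1" using Suc(3) D by (simp add: le_trans[OF _ Suc(3)])
  then obtain v where v: "v \<in> W" using card_0_eq finW by fastforce
  have eq: "nn E W v = W - insert v {u\<in>U. E v u}" using Suc(2) by (auto simp: nn_def)
  have "card W - card (insert v {u\<in>U. E v u}) \<le> card (nn E W v)"
    unfolding eq by (rule diff_card_le_card_Diff) (use fin in auto)
  moreover have "card (insert v {u\<in>U. E v u}) \<le> D"
  proof -
    have "card (insert v {u\<in>U. E v u}) \<le> Suc (card {u\<in>U. E v u})"
      by (rule card_insert_le_m1) (use fin in auto)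
    moreover have "card {u\<in>U. E v u} < D" using deg v Suc(2) by blast
    ultimately show ?thesis by simp
  qed
  ultimately have "j * D \<le> card (nn E W v)" using Suc(3) by simp
  moreover have "nn E W v \<subseteq> U" using Suc(2) by (auto simp: nn_def)
  ultimately have "2 ^ j \<le> card (ind E (nn E W v))" using Suc.IH by blast
  moreover have "2 * card (ind E (nn E W v)) \<le> card (ind E W)"
    by (rule ind_double[OF finW v irr sym])
  ultimately show ?case by simp
qed

lemma cf_nbr:
  assumes irr: "\<forall>a. \<not> E a a" and sym: "\<forall>a b. E a b \<longrightarrow> E b a" and v: "v \<in> U" and cf: "cf (Suc r) E U"
  shows "cf r E {u\<in>U. E v u}"
  unfolding cf_def
proof
  assume "\<exists>C. C \<subseteq> {u \<in> U. E v u} \<and> (\<forall>u\<in>C. \<forall>w\<in>C. u \<noteq> w \<longrightarrow> E u w) \<and> finite C \<and> card C = r"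
  then obtain C where C: "C \<subseteq> {u \<in> U. E v u}" "\<forall>u\<in>C. \<forall>w\<in>C. u \<noteq> w \<longrightarrow> E u w" "finite C" "card C = r"
    by blast
  have vC: "v \<notin> C" using C(1) irr by auto
  have "insert v C \<subseteq> U" using C(1) v by auto
  moreover have "\<forall>u\<in>insert v C. \<forall>w\<in>insert v C. u \<noteq> w \<longrightarrow> E u w"
  proof (intro ballI impI)
    fix a b assume ab: "a \<in> insert v C" "b \<in> insert v C" "a \<noteq> b"
    show "E a b"
    proof (cases "a = v")
      case True then show ?thesis using ab C(1) by auto
    next
      case False
      then have a: "a \<in> C" using ab by auto
      show ?thesis
      proof (cases "b = v")
        case True then show ?thesis using a C(1) sym by auto
      next
        case False then show ?thesis using a ab C(2) by auto
      qed
    qed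
  qed
  moreover have "finite (insert v C)" "card (insert v C) = Suc r" using C(3,4) vC by auto
  ultimately show False using cf unfolding cf_def by blast
qed



lemma indep_power:
  assumes irr: "\<forall>a. \<not> E a a" and sym: "\<forall>a b. E a b \<longrightarrow> E b a"
  shows "finite U \<Longrightarrow> cf (Suc m) E U \<Longrightarrow> t ^ m \<le> card U \<Longrightarrow> 2 ^ t \<le> card (ind E U)"
proof (induction m arbitrary: U)
  case 0
  then obtain u where u: "u \<in> U" by fastforce
  have "\<exists>C. C \<subseteq> U \<and> (\<forall>a\<in>C. \<forall>b\<in>C. a \<noteq> b \<longrightarrow> E a b) \<and> finite C \<and> card C = Suc 0"
    by (rule exI[of _ "{u}"]) (use u in auto)
  then show ?case using 0(2) unfolding cf_def by blast
next
  case (Suc m)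
  show ?case
  proof (cases "t = 0")
    case True then show ?thesis using ind_ge1[OF Suc(2)] by simp
  next
    case False
    then have D: "t ^ m \<ge> 1" by simp
    show ?thesis
    proof (cases "\<exists>v\<in>U. t ^ m \<le> card {u\<in>U. E v u}")
      case True
      then obtain v where v: "v \<in> U" "t ^ m \<le> card {u\<in>U. E v u}" by blast
      have "cf (Suc m) E {u\<in>U. E v u}" by (rule cf_nbr[OF irr sym v(1) Suc(3)])
      moreover have "finite {u\<in>U. E v u}" using Suc(2) by simp
      ultimately have "2 ^ t \<le> card (ind E {u\<in>U. E v u})" using Suc.IH v(2) by blast
      also have "\<dots> \<le> card (ind E U)" by (rule ind_mono[OF Suc(2)]) auto
      finally show ?thesis .
    next
      case False
      then have deg: "\<forall>v\<in>U. card {u\<in>U. E v u} < t ^ m" by (auto simp: not_le)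
      have "t * t ^ m \<le> card U" using Suc(4) by simp
      then show ?thesis using greedy[OF irr sym Suc(2) D deg, of U t] by simp
    qed
  qed
qed

lemma nn_exists:
  assumes irr: "\<forall>a. \<not> E a a" and sym: "\<forall>a b. E a b \<longrightarrow> E b a"
  shows "finite U \<Longrightarrow> U \<noteq> {} \<Longrightarrow> cf (Suc (Suc m)) E U \<Longrightarrow>
    \<exists>v\<in>U. card U \<le> Suc m * (card (nn E U v) + 1)"
proof (induction m arbitrary: U)
  case 0
  have noedge: "\<not> E a b" if ab: "a \<in> U" "b \<in> U" for a b
  proof
    assume e: "E a b"
    then have "a \<noteq> b" using irr by auto
    then have "\<exists>C. C \<subseteq> U \<and> (\<forall>x\<in>C. \<forall>y\<in>C. x \<noteq> y \<longrightarrow> E x y) \<and> finite C \<and> card C = Suc (Suc 0)"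
      by (intro exI[of _ "{a,b}"]) (use ab e sym in auto)
    then show False using 0(3) unfolding cf_def by blast
  qed
  obtain v where v: "v \<in> U" using 0(2) by blast
  have "nn E U v = U - {v}" using noedge v by (auto simp: nn_def)
  then have "card (nn E U v) + 1 = card U" using v 0(1)
    by (metis One_nat_def Suc_pred card_Diff_singleton card_gt_0_iff empty_iff add.commute plus_1_eq_Suc)
  then show ?case using v by (intro bexI[of _ v]) auto
next
  case (Suc m)
  obtain v where v: "v \<in> U" using Suc(3) by blast
  show ?case
  proof (cases "card U \<le> Suc (Suc m) * (card (nn E U v) + 1)")
    case True then show ?thesis using v by blast
  next
    case False
    define N where "N = {u\<in>U. E v u}"
    have cfN: "cf (Suc (Suc m)) E N" unfolding N_def by (rule cf_nbr[OF irr sym v Suc(4)])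
    have finN: "finite N" using Suc(2) by (simp add: N_def)
    have Ueq: "U = insert v (nn E U v \<union> N)" using v irr by (auto simp: N_def nn_def)
    have "card U = Suc (card (nn E U v) + card N)"
    proof -
      have f1: "finite (nn E U v)" using Suc(2) by (simp add: nn_def)
      have "card (nn E U v \<union> N) = card (nn E U v) + card N"
        by (rule card_Un_disjoint[OF f1 finN]) (auto simp: nn_def N_def)
      moreover have "v \<notin> nn E U v \<union> N" using irr by (auto simp: nn_def N_def)
      ultimately show ?thesis using f1 finN by (subst Ueq) simp
    qed
    note cardU = this
    have "N \<noteq> {}"
    proof
      assume "N = {}"
      then have "card U = Suc (card (nn E U v))" using cardU by simp
      then show False using False by simp
    qed
    then obtain u where u: "u \<in> N" "card N \<le> Suc m * (card (nn E N u) + 1)"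
      using Suc.IH[OF finN _ cfN] by blast
    have "nn E N u \<subseteq> nn E U u" by (auto simp: nn_def N_def)
    then have "card (nn E N u) \<le> card (nn E U u)"
      by (rule card_mono[rotated]) (use Suc(2) in \<open>simp add: nn_def\<close>)
    then have ha: "card N \<le> Suc m * (card (nn E U u) + 1)" using u(2)
      by (meson add_le_mono1 le_trans mult_le_mono2)
    define a where "a = card (nn E U u) + 1"
    define b where "b = card (nn E U v) + 1"
    define n where "n = card U"
    have h1: "n \<le> Suc m * a + b" using ha cardU unfolding a_def b_def n_def by simp
    have h2: "Suc (Suc m) * b < n" using False unfolding b_def n_def by simp
    have "Suc m * n \<le> Suc m * (Suc (Suc m) * a)"
    proof -
      have "Suc (Suc m) * n \<le> Suc (Suc m) * (Suc m * a) + Suc (Suc m) * b"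
        using h1 by (metis add_mult_distrib2 mult_le_mono2)
      then have "Suc (Suc m) * n \<le> Suc (Suc m) * (Suc m * a) + n" using h2 by linarith
      then show ?thesis by (simp add: algebra_simps)
    qed
    then have "n \<le> Suc (Suc m) * a" by (meson Suc_le_mono mult_le_cancel1 zero_less_Suc)
    moreover have "u \<in> U" using u(1) by (simp add: N_def)
    ultimately show ?thesis unfolding n_def a_def by blast
  qed
qed



lemma iter:
  assumes irr: "\<forall>a. \<not> E a a" and sym: "\<forall>a b. E a b \<longrightarrow> E b a"
    and hB: "\<forall>W. finite W \<longrightarrow> cf (Suc (Suc m)) E W \<longrightarrow> s \<le> card W \<longrightarrow> c \<le> d * card (ind E W)"
  shows "finite U \<Longrightarrow> cf (Suc (Suc m)) E U \<Longrightarrow> Suc m * (s + 1) + k \<le> card U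
     \<Longrightarrow> k * c \<le> d * card (ind E U)"
proof (induction k arbitrary: U)
  case 0 then show ?case by simp
next
  case (Suc k)
  have "U \<noteq> {}" using Suc(4) by auto
  then obtain v where v: "v \<in> U" "card U \<le> Suc m * (card (nn E U v) + 1)"
    using nn_exists[OF irr sym Suc(2) _ Suc(3)] by blast
  have "Suc m * (s + 1) \<le> Suc m * (card (nn E U v) + 1)" using v(2) Suc(4) by linarith
  then have "s + 1 \<le> card (nn E U v) + 1" by (metis mult_le_cancel1 zero_less_Suc)
  then have "s \<le> card (nn E U v)" by simp
  moreover have "finite (nn E U v)" using Suc(2) by (simp add: nn_def)
  moreover have "cf (Suc (Suc m)) E (nn E U v)" by (rule cf_mono[OF _ Suc(3)]) (auto simp: nn_def)
  ultimately have 1: "c \<le> d * card (ind E (nn E U v))" using hB by blast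
  have "card (U - {v}) = card U - 1" using v(1) Suc(2) by simp
  then have "Suc m * (s + 1) + k \<le> card (U - {v})" using Suc(4) by simp
  moreover have "cf (Suc (Suc m)) E (U - {v})" by (rule cf_mono[OF _ Suc(3)]) auto
  ultimately have 2: "k * c \<le> d * card (ind E (U - {v}))" using Suc.IH Suc(2) by blast
  have 3: "card (ind E (U - {v})) + card (ind E (nn E U v)) \<le> card (ind E U)"
    by (rule ind_split[OF Suc(2) v(1) irr sym])
  have "Suc k * c \<le> d * card (ind E (U - {v})) + d * card (ind E (nn E U v))"
    using 1 2 by simp
  also have "\<dots> \<le> d * card (ind E U)" using 3
    by (metis add_mult_distrib2 mult_le_mono2)
  finally show ?case .
qed

lemma exp_tri: "Suc h * (Suc h + 1) div 2 = Suc h + h * (h + 1) div 2"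
proof -
  have "Suc h * (Suc h + 1) = h * (h + 1) + 2 * Suc h" by (simp add: algebra_simps)
  then show ?thesis by simp
qed

lemma level:
  assumes irr: "\<forall>a. \<not> E a a" and sym: "\<forall>a b. E a b \<longrightarrow> E b a"
  shows "finite U \<Longrightarrow> cf (Suc (Suc m)) E U \<Longrightarrow> (4 * Suc (Suc m)) ^ h \<le> card U
     \<Longrightarrow> (4 * Suc (Suc m)) ^ (h * (h + 1) div 2) \<le> 2 ^ h * card (ind E U)"
proof (induction h arbitrary: U)
  case 0 then show ?case using ind_ge1[OF 0(1)] by simp
next
  case (Suc h)
  define t where "t = 4 * Suc (Suc m)"
  define q where "q = Suc m * (t ^ h + 1)"
  define k where "k = t ^ Suc h - q"
  have th: "t ^ h \<ge> 1" by (simp add: t_def)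
  have "2 * q \<le> t ^ Suc h"
  proof -
    have "2 * q = 2 * Suc m * t ^ h + 2 * Suc m" by (simp add: q_def algebra_simps)
    also have "\<dots> \<le> 2 * Suc m * t ^ h + 2 * Suc m * t ^ h" using th
      using mult_le_mono2[OF th, of "2 * Suc m"] by simp
    also have "\<dots> \<le> t * t ^ h" unfolding t_def by (simp add: algebra_simps)
    finally show ?thesis by simp
  qed
  then have k2: "t ^ Suc h \<le> 2 * k" and qk: "q + k \<le> card U"
    using Suc(4) unfolding k_def t_def[symmetric] by auto
  have hB: "\<forall>W. finite W \<longrightarrow> cf (Suc (Suc m)) E W \<longrightarrow> t ^ h \<le> card W
      \<longrightarrow> t ^ (h * (h + 1) div 2) \<le> 2 ^ h * card (ind E W)"
    using Suc.IH unfolding t_def by blast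
  have "k * t ^ (h * (h + 1) div 2) \<le> 2 ^ h * card (ind E U)"
    by (rule iter[OF irr sym hB Suc(2) Suc(3)]) (use qk in \<open>simp add: q_def\<close>)
  then have "2 * k * t ^ (h * (h + 1) div 2) \<le> 2 ^ Suc h * card (ind E U)" by simp
  moreover have "t ^ Suc h * t ^ (h * (h + 1) div 2) \<le> 2 * k * t ^ (h * (h + 1) div 2)"
    using k2 by simp
  ultimately have "t ^ Suc h * t ^ (h * (h + 1) div 2) \<le> 2 ^ Suc h * card (ind E U)"
    by (rule le_trans[rotated])
  moreover have "t ^ (Suc h + h * (h + 1) div 2) = t ^ Suc h * t ^ (h * (h + 1) div 2)"
    by (rule power_add)
  ultimately have "t ^ (Suc h + h * (h + 1) div 2) \<le> 2 ^ Suc h * card (ind E U)" by (simp only:)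
  then show ?case unfolding exp_tri t_def .
qed



lemma ind_ge_card:
  assumes irr: "\<forall>a. \<not> E a a" and fin: "finite U"
  shows "card U \<le> card (ind E U)"
proof -
  have "card U = card ((\<lambda>u. {u}) ` U)" by (rule card_image[symmetric]) (auto simp: inj_on_def)
  also have "\<dots> \<le> card (ind E U)"
    by (rule card_mono[OF ind_finite[OF fin]]) (use irr in \<open>auto simp: ind_def\<close>)
  finally show ?thesis .
qed

lemma arith2:
  fixes l h L :: real
  assumes l: "l \<ge> 3" and h: "h \<ge> 1" and L: "0 \<le> L" "L < (h + 1) * l"
  shows "L\<^sup>2 / (18 * (l - 1)) \<le> h * (h + 1) * l / 2 - h"
proof -
  have s1: "L\<^sup>2 \<le> ((h + 1) * l)\<^sup>2" using L by (intro power_mono) auto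
  have s2: "((h + 1) * l)\<^sup>2 \<le> 2 * h * (h + 1) * l\<^sup>2"
  proof -
    have "(h + 1) * (h + 1) \<le> (2 * h) * (h + 1)" by (rule mult_right_mono) (use h in auto)
    then have "((h + 1) * (h + 1)) * l\<^sup>2 \<le> ((2 * h) * (h + 1)) * l\<^sup>2" by (rule mult_right_mono) simp
    then show ?thesis by (simp add: power2_eq_square algebra_simps)
  qed
  have a: "l - 1 \<ge> 2 * l / 3" using l by simp
  have b: "h * (h + 1) * l / 2 - h \<ge> h * (h + 1) * l / 6"
  proof -
    have "(h + 1) * l \<ge> 1 * 3" using l h by (intro mult_mono) auto
    then have "(h + 1) * l \<ge> 3" by simp
    then have "h * ((h + 1) * l) \<ge> h * 3" using h by (intro mult_left_mono) auto
    then have "h * (h + 1) * l \<ge> 3 * h" by (simp add: algebra_simps)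
    then show ?thesis by linarith
  qed
  have c: "0 \<le> h * (h + 1) * l / 6" using h l by simp
  have "18 * (2 * l / 3) * (h * (h + 1) * l / 6) \<le> 18 * (l - 1) * (h * (h + 1) * l / 2 - h)"
    using a b c l by (intro mult_mono) auto
  moreover have "18 * (2 * l / 3) * (h * (h + 1) * l / 6) = 2 * h * (h + 1) * l\<^sup>2"
    by (simp add: power2_eq_square algebra_simps)
  ultimately have "L\<^sup>2 \<le> 18 * (l - 1) * (h * (h + 1) * l / 2 - h)" using s1 s2 by linarith
  moreover have "0 < 18 * (l - 1)" using l by simp
  ultimately show ?thesis by (simp add: pos_divide_le_eq mult.commute)
qed



theorem mainTheorem3:
  fixes V :: "'a set" and E :: "'a \<Rightarrow> 'a \<Rightarrow> bool" and r x :: nat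
  assumes "r \<ge> 2" and "x \<ge> 2"
    and "simple_graph V E" and "card V = x" and "Kr_free r V E"
  shows "log 2 (real (num_independent_sets V E))
           \<ge> max (real x powr (1 / real r) / 2)
                  ((log 2 (real x))\<^sup>2 / (18 * log 2 (2 * real r)))"
proof -
  have fin: "finite V" and sym: "\<forall>a b. E a b \<longrightarrow> E b a" and irr: "\<forall>a. \<not> E a a"
    using assms(3) unfolding simple_graph_def by auto
  have cfr: "cf r E V" using assms(5) unfolding Kr_free_def cf_def is_clique_def by (simp add: conj_assoc)
  have Ieq: "num_independent_sets V E = card (ind E V)"
    unfolding num_independent_sets_def ind_def is_independent_def by simp
  define I where "I = card (ind E V)"
  obtain m where m: "r = Suc (Suc m)" using assms(1) by (metis add_2_eq_Suc le_Suc_ex)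
  have Ix: "x \<le> I" unfolding I_def using ind_ge_card[of E, OF irr fin] assms(4) by simp
  have Ipos: "0 < real I" using Ix assms(2) by simp
  have logIx: "log 2 (real x) \<le> log 2 (real I)" using Ix assms(2) by simp
  have logI1: "1 \<le> log 2 (real I)"
  proof -
    have "log 2 2 \<le> log 2 (real I)" using Ix assms(2) by simp
    then show ?thesis by simp
  qed
  have B1: "real x powr (1 / real r) / 2 \<le> log 2 (real I)"
  proof -
    define a where "a = real x powr (1 / real r)"
    define t where "t = nat \<lfloor>a\<rfloor>"
    have a0: "0 \<le> a" unfolding a_def by simp
    have ta: "real t \<le> a" unfolding t_def using a0 by linarith
    have ta2: "a < real t + 1" unfolding t_def using a0 by linarith
    have "a ^ r = real x" unfolding a_def using assms
      by (simp add: powr_realpow[symmetric] powr_powr)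
    then have "real t ^ r \<le> real x" using ta by (metis of_nat_0_le_iff power_mono)
    then have tr: "t ^ r \<le> x" by (metis of_nat_le_iff of_nat_power)
    have "t ^ Suc m \<le> x"
    proof (cases "t = 0")
      case True then show ?thesis by simp
    next
      case False
      then have "t ^ Suc m \<le> t ^ r" unfolding m by (intro power_increasing) auto
      then show ?thesis using tr by simp
    qed
    then have "2 ^ t \<le> I" unfolding I_def
      using indep_power[OF irr sym fin, of "Suc m" t] cfr m assms(4) by simp
    then have "(2::real) ^ t \<le> real I" by (metis of_nat_le_iff of_nat_numeral of_nat_power)
    then have "log 2 ((2::real) ^ t) \<le> log 2 (real I)" using Ipos by (subst log_le_cancel_iff) auto
    then have tI: "real t \<le> log 2 (real I)" by (simp add: log_nat_power)
    show ?thesis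
    proof (cases "a < 2")
      case True then show ?thesis using logI1 unfolding a_def[symmetric] by simp
    next
      case False then show ?thesis using ta2 tI unfolding a_def[symmetric] by simp
    qed
  qed
  have B2: "(log 2 (real x))\<^sup>2 / (18 * log 2 (2 * real r)) \<le> log 2 (real I)"
  proof -
    define T where "T = 4 * Suc (Suc m)"
    define l where "l = log 2 (real T)"
    define L where "L = log 2 (real x)"
    have T8: "real T \<ge> 8" unfolding T_def by simp
    have l3: "l \<ge> 3"
    proof -
      have "log 2 8 \<le> l" unfolding l_def using T8 by simp
      moreover have "log 2 (8::real) = 3"
      proof -
        have "(8::real) = 2 ^ 3" by simp
        then have "log 2 (8::real) = log 2 (2 ^ 3)" by simp
        also have "\<dots> = real 3 * log 2 2" by (rule log_nat_power) simp
        also have "\<dots> = 3" by simp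
        finally show ?thesis .
      qed
      ultimately show ?thesis by simp
    qed
    have l2r: "log 2 (2 * real r) = l - 1"
    proof -
      have "real T = 2 * (2 * real r)" unfolding T_def m by simp
      moreover have "log 2 (2 * (2 * real r)) = log 2 2 + log 2 (2 * real r)"
        by (rule log_mult_pos) (use m in auto)
      ultimately have "l = log 2 2 + log 2 (2 * real r)" unfolding l_def by simp
      then show ?thesis by simp
    qed
    have L0: "0 \<le> L" unfolding L_def using assms(2) by simp
    define h where "h = nat \<lfloor>L / l\<rfloor>"
    have hl: "real h \<le> L / l" unfolding h_def using L0 l3 by simp
    have hl2: "L / l < real h + 1" unfolding h_def using L0 l3 by linarith
    have hlL: "real h * l \<le> L" using hl l3 by (simp add: pos_le_divide_eq)
    have LhL: "L < (real h + 1) * l" using hl2 l3 by (simp add: pos_divide_less_eq)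
    have "T ^ h \<le> x"
    proof -
      have "log 2 (real (T ^ h)) = real h * l" unfolding l_def using T8 by (simp add: log_nat_power)
      then have "log 2 (real (T ^ h)) \<le> log 2 (real x)" using hlL unfolding L_def by simp
      then have "real (T ^ h) \<le> real x" using T8 assms(2) by (subst (asm) log_le_cancel_iff) auto
      then show ?thesis by linarith
    qed
    then have lev: "T ^ (h * (h + 1) div 2) \<le> 2 ^ h * I" unfolding I_def T_def
      using level[OF irr sym fin, of m h] cfr m assms(4) by simp
    have ev: "real (h * (h + 1) div 2) = real h * (real h + 1) / 2"
    proof -
      have "even (h * (h + 1))" by simp
      then have "2 * (h * (h + 1) div 2) = h * (h + 1)" by simp
      then have "real (2 * (h * (h + 1) div 2)) = real (h * (h + 1))" by simp
      then have "2 * real (h * (h + 1) div 2) = real h * (real h + 1)"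
        unfolding of_nat_mult of_nat_add of_nat_1 of_nat_numeral .
      then show ?thesis by simp
    qed
    have "real (T ^ (h * (h + 1) div 2)) \<le> real (2 ^ h * I)" using lev by linarith
    then have "log 2 (real (T ^ (h * (h + 1) div 2))) \<le> log 2 (real (2 ^ h * I))"
      using T8 Ipos by (subst log_le_cancel_iff) auto
    moreover have "log 2 (real (T ^ (h * (h + 1) div 2))) = real h * (real h + 1) / 2 * l"
      unfolding l_def using T8 ev by (simp add: log_nat_power)
    moreover have "log 2 (real (2 ^ h * I)) = real h + log 2 (real I)"
      using Ipos by (simp add: log_mult log_nat_power)
    ultimately have main: "real h * (real h + 1) * l / 2 - real h \<le> log 2 (real I)" by simp
    show ?thesis
    proof (cases "h = 0")
      case True
      then have "L < l" using LhL by simp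
      then have "L \<le> 18 * (l - 1)" using l3 by simp
      then have "L * L \<le> L * (18 * (l - 1))" using L0 by (intro mult_left_mono) auto
      then have "L\<^sup>2 / (18 * (l - 1)) \<le> L" using l3 by (simp add: pos_divide_le_eq power2_eq_square)
      then show ?thesis using logIx unfolding l2r L_def by simp
    next
      case False
      then have "real h \<ge> 1" by simp
      from arith2[OF l3 this L0 LhL] main show ?thesis unfolding l2r L_def by simp
    qed
  qed
  show ?thesis using B1 B2 unfolding Ieq I_def[symmetric] by simp
qed

end
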